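(* Let $M$ be a finite set of alternatives, $\mathcal{R}$ the set of weak preference orders on $M$, and $\varphi:\mathcal{R}\to\Delta(M)$ a mechanism. If $\varphi$ is separation monotonic, separation upper invariant, and separation lower invariant, then it is separation strategyproof, i.e., for every separation $(R,R')$, $\varphi(R)$ first order-stochastically dominates $\varphi(R')$ at $R$, and $\varphi(R')$ first order-stochastically dominates $\varphi(R)$ at $R'$.
   Context: A preference order is a complete, transitive relation $R$ on $M$; $a\,I\,b$ means $a\,R\,b$ and $b\,R\,a$; $a\,P\,b$ means $a\,R\,b$ and not $b\,R\,a$. Write $R$ as $M_1\,P\,\cdots\,P\,M_K$ where $(M_k)$ are the nonempty indifference classes ordered so that $a\,P\,b$ for $a\in M_k$, $b\in M_{k'}$, $k<k'$. For $A\subseteq M$, $\varphi_A(R)=\sum_{a\in A}(\varphi(R))_a$. A lottery $x$ first order-stochastically dominates $y$ at $R$ if $\sum_{j: j R a}x_j\ge\sum_{j: j R a}y_j$ for all $a\in M$. A separation is a pair $(R,R')$ such that, with $R=M_1\,P\,\cdots\,P\,M_K$, there are $\kappa\in\{1,\dots,K\}$ and a partition of $M_\kappa$ into disjoint nonempty $M_\kappa^1,M_\kappa^2$ with $R'=M_1\,P'\,\cdots\,P'\,M_{\kappa-1}\,P'\,M_\kappa^1\,P'\,M_\kappa^2\,P'\,M_{\kappa+1}\,P'\,\cdots\,P'\,M_K$ (indifference within each listed set). Axioms, for every separation $(R,R')$: separation responsive: $\varphi_{M_\kappa^1}(R')\ge\varphi_{M_\kappa^1}(R)$ and $\varphi_{M_\kappa^2}(R')\le\varphi_{M_\kappa^2}(R)$;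 separation direct: if $\varphi_{M_k}(R)\ne\varphi_{M_k}(R')$ for some $k\in\{1,\dots,K\}$ then $\varphi_{M_\kappa^1}(R')\ne\varphi_{M_\kappa^1}(R)$ and $\varphi_{M_\kappa^2}(R')\ne\varphi_{M_\kappa^2}(R)$; separation monotonic: responsive and direct; separation upper invariant: $\varphi_{M_k}(R)=\varphi_{M_k}(R')$ for $k<\kappa$; separation lower invariant: $\varphi_{M_k}(R)=\varphi_{M_k}(R')$ for $k>\kappa$. *)

theory Defs
  imports Complex_Main
begin

text \<open>A weak preference order on M: a complete, transitive relation on M
  (represented as a subset of M \<times> M; (a,b) \<in> R means a R b).\<close>
definition pref_order :: "'a set \<Rightarrow> 'a rel \<Rightarrow> bool" where
  "pref_order M R \<longleftrightarrow> R \<subseteq> M \<times> M \<and> refl_on M R \<and> total_on M R \<and> trans R"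

definition lottery :: "'a set \<Rightarrow> ('a \<Rightarrow> real) \<Rightarrow> bool" where
  "lottery M x \<longleftrightarrow> (\<forall>a\<in>M. x a \<ge> 0) \<and> (\<Sum>a\<in>M. x a) = 1"

definition mechanism :: "'a set \<Rightarrow> ('a rel \<Rightarrow> 'a \<Rightarrow> real) \<Rightarrow> bool" where
  "mechanism M \<phi> \<longleftrightarrow> (\<forall>R. pref_order M R \<longrightarrow> lottery M (\<phi> R))"

definition prob_of :: "('a rel \<Rightarrow> 'a \<Rightarrow> real) \<Rightarrow> 'a rel \<Rightarrow> 'a set \<Rightarrow> real" where
  "prob_of \<phi> R A = (\<Sum>a\<in>A. \<phi> R a)"

definition ind_class :: "'a set \<Rightarrow> 'a rel \<Rightarrow> 'a set \<Rightarrow> bool" where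
  "ind_class M R X \<longleftrightarrow> (\<exists>a\<in>M. X = {b\<in>M. (a,b) \<in> R \<and> (b,a) \<in> R})"

definition strictly_above :: "'a rel \<Rightarrow> 'a set \<Rightarrow> 'a set \<Rightarrow> bool" where
  "strictly_above R X Y \<longleftrightarrow> (\<forall>x\<in>X. \<forall>y\<in>Y. (x,y) \<in> R \<and> (y,x) \<notin> R)"

text \<open>(R,R') is a separation splitting the indifference class M_\<kappa> = A \<union> B of R
  into M_\<kappa>^1 = A above M_\<kappa>^2 = B, all else unchanged.\<close>
definition separation :: "'a set \<Rightarrow> 'a rel \<Rightarrow> 'a rel \<Rightarrow> 'a set \<Rightarrow> 'a set \<Rightarrow> bool" where
  "separation M R R' A B \<longleftrightarrow>
     pref_order M R \<and> ind_class M R (A \<union> B) \<and> A \<noteq> {} \<and> B \<noteq> {} \<and> A \<inter> B = {} \<and>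
     R' = R - B \<times> A"

definition sep_responsive :: "'a set \<Rightarrow> ('a rel \<Rightarrow> 'a \<Rightarrow> real) \<Rightarrow> bool" where
  "sep_responsive M \<phi> \<longleftrightarrow> (\<forall>R R' A B. separation M R R' A B \<longrightarrow>
     prob_of \<phi> R' A \<ge> prob_of \<phi> R A \<and> prob_of \<phi> R' B \<le> prob_of \<phi> R B)"

definition sep_direct :: "'a set \<Rightarrow> ('a rel \<Rightarrow> 'a \<Rightarrow> real) \<Rightarrow> bool" where
  "sep_direct M \<phi> \<longleftrightarrow> (\<forall>R R' A B. separation M R R' A B \<longrightarrow>
     (\<exists>X. ind_class M R X \<and> prob_of \<phi> R X \<noteq> prob_of \<phi> R' X) \<longrightarrow>
     prob_of \<phi> R' A \<noteq> prob_of \<phi> R A \<and> prob_of \<phi> R' B \<noteq> prob_of \<phi> R B)"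

definition sep_monotonic :: "'a set \<Rightarrow> ('a rel \<Rightarrow> 'a \<Rightarrow> real) \<Rightarrow> bool" where
  "sep_monotonic M \<phi> \<longleftrightarrow> sep_responsive M \<phi> \<and> sep_direct M \<phi>"

definition sep_upper_invariant :: "'a set \<Rightarrow> ('a rel \<Rightarrow> 'a \<Rightarrow> real) \<Rightarrow> bool" where
  "sep_upper_invariant M \<phi> \<longleftrightarrow> (\<forall>R R' A B. separation M R R' A B \<longrightarrow>
     (\<forall>X. ind_class M R X \<and> strictly_above R X (A \<union> B) \<longrightarrow> prob_of \<phi> R X = prob_of \<phi> R' X))"

definition sep_lower_invariant :: "'a set \<Rightarrow> ('a rel \<Rightarrow> 'a \<Rightarrow> real) \<Rightarrow> bool" where
  "sep_lower_invariant M \<phi> \<longleftrightarrow> (\<forall>R R' A B. separation M R R' A B \<longrightarrow>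
     (\<forall>X. ind_class M R X \<and> strictly_above R (A \<union> B) X \<longrightarrow> prob_of \<phi> R X = prob_of \<phi> R' X))"

definition fosd :: "'a set \<Rightarrow> 'a rel \<Rightarrow> ('a \<Rightarrow> real) \<Rightarrow> ('a \<Rightarrow> real) \<Rightarrow> bool" where
  "fosd M R x y \<longleftrightarrow> (\<forall>a\<in>M. (\<Sum>j\<in>{j\<in>M. (j,a) \<in> R}. x j) \<ge> (\<Sum>j\<in>{j\<in>M. (j,a) \<in> R}. y j))"

definition sep_strategyproof :: "'a set \<Rightarrow> ('a rel \<Rightarrow> 'a \<Rightarrow> real) \<Rightarrow> bool" where
  "sep_strategyproof M \<phi> \<longleftrightarrow> (\<forall>R R' A B. separation M R R' A B \<longrightarrow>
     fosd M R (\<phi> R) (\<phi> R') \<and> fosd M R' (\<phi> R') (\<phi> R))"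

end

theory Submission
  imports Defs
begin

definition cls :: "'a set \<Rightarrow> 'a rel \<Rightarrow> 'a \<Rightarrow> 'a set" where
  "cls M R j = {b\<in>M. (j,b) \<in> R \<and> (b,j) \<in> R}"

lemma sum_classes:
  assumes fin: "finite M" and po: "pref_order M R" and UM: "U \<subseteq> M"
    and cl: "\<And>j x. j \<in> U \<Longrightarrow> x \<in> M \<Longrightarrow> (j,x) \<in> R \<Longrightarrow> (x,j) \<in> R \<Longrightarrow> x \<in> U"
  shows "sum d U = (\<Sum>X\<in>cls M R ` U. sum d X)"
proof -
  have finU: "finite U" using fin UM finite_subset by blast
  have rf: "\<And>x. x \<in> M \<Longrightarrow> (x,x) \<in> R" using po unfolding pref_order_def refl_on_def by blast
  have tr: "trans R" using po unfolding pref_order_def by blast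
  have "sum d U = (\<Sum>X\<in>cls M R ` U. sum d {x\<in>U. cls M R x = X})"
    by (rule sum.image_gen[OF finU])
  also have "\<dots> = (\<Sum>X\<in>cls M R ` U. sum d X)"
  proof (rule sum.cong[OF refl])
    fix X assume "X \<in> cls M R ` U"
    then obtain j where j: "j \<in> U" "X = cls M R j" by blast
    have "{x\<in>U. cls M R x = cls M R j} = cls M R j"
    proof
      show "{x\<in>U. cls M R x = cls M R j} \<subseteq> cls M R j"
      proof
        fix x assume "x \<in> {x\<in>U. cls M R x = cls M R j}"
        then have "x \<in> U" "cls M R x = cls M R j" by auto
        moreover have "x \<in> cls M R x" using \<open>x \<in> U\<close> UM rf unfolding cls_def by auto
        ultimately show "x \<in> cls M R j" by simp
      qed
    next
      show "cls M R j \<subseteq> {x\<in>U. cls M R x = cls M R j}"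
      proof
        fix x assume x: "x \<in> cls M R j"
        then have xm: "x \<in> M" "(j,x) \<in> R" "(x,j) \<in> R" unfolding cls_def by auto
        then have "x \<in> U" using cl j(1) by blast
        moreover have "cls M R x = cls M R j"
          unfolding cls_def using xm tr by (auto dest: transD)
        ultimately show "x \<in> {x\<in>U. cls M R x = cls M R j}" by simp
      qed
    qed
    then show "sum d {x\<in>U. cls M R x = X} = sum d X" using j by simp
  qed
  finally show ?thesis .
qed

lemma sep_pref:
  assumes "separation M R R' A B"
  shows "pref_order M R'"
proof -
  have po: "pref_order M R" and ic: "ind_class M R (A \<union> B)" and dis: "A \<inter> B = {}"
    and R': "R' = R - B \<times> A" using assms unfolding separation_def by auto
  obtain c where c: "c \<in> M" "A \<union> B = {b\<in>M. (c,b) \<in> R \<and> (b,c) \<in> R}"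
    using ic unfolding ind_class_def by blast
  have tr: "trans R" using po unfolding pref_order_def by blast
  have sub: "R' \<subseteq> M \<times> M" using po R' unfolding pref_order_def by auto
  have rfl: "refl_on M R'" using po R' dis unfolding pref_order_def refl_on_def by auto
  have ind: "\<And>x y. x \<in> A \<union> B \<Longrightarrow> y \<in> A \<union> B \<Longrightarrow> (x,y) \<in> R"
  proof -
    fix x y assume "x \<in> A \<union> B" "y \<in> A \<union> B"
    then have "(x,c) \<in> R" "(c,y) \<in> R" using c by auto
    then show "(x,y) \<in> R" using tr by (meson transD)
  qed
  have tot: "total_on M R'" unfolding total_on_def
  proof (intro ballI impI)
    fix x y assume xy: "x \<in> M" "y \<in> M" "x \<noteq> y"
    have "(x,y) \<in> R \<or> (y,x) \<in> R" using po xy unfolding pref_order_def total_on_def by blast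
    moreover have "(y,x) \<in> R" if "x \<in> B" "y \<in> A" using ind that by blast
    moreover have "(x,y) \<in> R" if "y \<in> B" "x \<in> A" using ind that by blast
    ultimately show "(x,y) \<in> R' \<or> (y,x) \<in> R'" using R' dis by blast
  qed
  have "trans R'"
  proof (rule transI)
    fix x y z assume xy: "(x,y) \<in> R'" and yz: "(y,z) \<in> R'"
    have "(x,z) \<in> R" using xy yz R' tr by (auto dest: transD)
    moreover have "(x,z) \<notin> B \<times> A"
    proof
      assume xz: "(x,z) \<in> B \<times> A"
      then have xC: "(c,x) \<in> R" "(x,c) \<in> R" and zC: "(c,z) \<in> R" "(z,c) \<in> R"
        using c by blast+
      have xyR: "(x,y) \<in> R" and yzR: "(y,z) \<in> R" using xy yz R' by auto
      have ym: "y \<in> M" using xyR po unfolding pref_order_def by auto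
      have "(c,y) \<in> R" using xC xyR tr by (meson transD)
      moreover have "(y,c) \<in> R" using yzR zC tr by (meson transD)
      ultimately have "y \<in> A \<union> B" using c ym by blast
      then show False using xz xy yz R' by auto
    qed
    ultimately show "(x,z) \<in> R'" using R' by auto
  qed
  then show ?thesis using sub rfl tot unfolding pref_order_def by blast
qed

theorem lemma4:
  fixes M :: "'a set" and \<phi> :: "'a rel \<Rightarrow> 'a \<Rightarrow> real"
  assumes "finite M"
    and "mechanism M \<phi>"
    and "sep_monotonic M \<phi>"
    and "sep_upper_invariant M \<phi>"
    and "sep_lower_invariant M \<phi>"
  shows "sep_strategyproof M \<phi>"
  unfolding sep_strategyproof_def
proof (intro allI impI)
  fix R R' A B assume sep: "separation M R R' A B"
  have po: "pref_order M R" and ic: "ind_class M R (A \<union> B)" and dis: "A \<inter> B = {}"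
    and R': "R' = R - B \<times> A" using sep unfolding separation_def by simp_all
  have po': "pref_order M R'" using sep_pref[OF sep] .
  obtain c where c: "c \<in> M" "A \<union> B = cls M R c"
    using ic unfolding ind_class_def cls_def by blast
  have tr: "trans R" using po unfolding pref_order_def by blast
  have RM: "R \<subseteq> M \<times> M" using po unfolding pref_order_def by blast
  have tot: "\<And>x y. x \<in> M \<Longrightarrow> y \<in> M \<Longrightarrow> (x,y) \<in> R \<or> (y,x) \<in> R"
    using po unfolding pref_order_def total_on_def refl_on_def by metis
  define d where "d j = \<phi> R' j - \<phi> R j" for j
  have l1: "sum (\<phi> R) M = 1" using assms(2) po unfolding mechanism_def lottery_def by blast
  have l2: "sum (\<phi> R') M = 1" using assms(2) po' unfolding mechanism_def lottery_def by blast
  have sumd: "\<And>U. sum d U = sum (\<phi> R') U - sum (\<phi> R) U"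
    unfolding d_def by (simp add: sum_subtractf)
  have dM: "sum d M = 0" using sumd l1 l2 by simp
  have other: "sum d X = 0" if j: "j \<in> M" and X: "X = cls M R j" and ne: "X \<noteq> A \<union> B" for j X
  proof -
    have icX: "ind_class M R X" using j X unfolding ind_class_def cls_def by blast
    have nind: "\<not> ((j,c) \<in> R \<and> (c,j) \<in> R)"
    proof
      assume h: "(j,c) \<in> R \<and> (c,j) \<in> R"
      have "cls M R j = cls M R c" unfolding cls_def using h tr by (auto dest: transD)
      then show False using ne X c by simp
    qed
    from tot[OF j c(1)] nind consider "(j,c) \<in> R" "(c,j) \<notin> R" | "(c,j) \<in> R" "(j,c) \<notin> R" by blast
    then have "prob_of \<phi> R X = prob_of \<phi> R' X"
    proof cases
      case 1
      have "strictly_above R X (A \<union> B)"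
        unfolding strictly_above_def
      proof (intro ballI conjI)
        fix x y assume x: "x \<in> X" and y: "y \<in> A \<union> B"
        have xr: "(x,j) \<in> R" "(j,x) \<in> R" using x X unfolding cls_def by auto
        have yr: "(y,c) \<in> R" "(c,y) \<in> R" using y c unfolding cls_def by auto
        show "(x,y) \<in> R" using xr yr 1 tr by (meson transD)
        show "(y,x) \<notin> R"
        proof
          assume "(y,x) \<in> R"
          then have "(c,j) \<in> R" using xr yr tr by (meson transD)
          then show False using 1 by simp
        qed
      qed
      then show ?thesis using assms(4) sep icX unfolding sep_upper_invariant_def by blast
    next
      case 2
      have "strictly_above R (A \<union> B) X"
        unfolding strictly_above_def
      proof (intro ballI conjI)
        fix x y assume y: "y \<in> X" and x: "x \<in> A \<union> B"
        have yr: "(y,j) \<in> R" "(j,y) \<in> R" using y X unfolding cls_def by auto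
        have xr: "(x,c) \<in> R" "(c,x) \<in> R" using x c unfolding cls_def by auto
        show "(x,y) \<in> R" using xr yr 2 tr by (meson transD)
        show "(y,x) \<notin> R"
        proof
          assume "(y,x) \<in> R"
          then have "(j,c) \<in> R" using xr yr tr by (meson transD)
          then show False using 2 by simp
        qed
      qed
      then show ?thesis using assms(5) sep icX unfolding sep_lower_invariant_def by blast
    qed
    then show ?thesis using sumd unfolding prob_of_def by simp
  qed
  have clM: "\<And>j x. j \<in> M \<Longrightarrow> x \<in> M \<Longrightarrow> (j,x) \<in> R \<Longrightarrow> (x,j) \<in> R \<Longrightarrow> x \<in> M" by blast
  have Cin: "A \<union> B \<in> cls M R ` M" using c by blast
  have finC: "finite (cls M R ` M)" using assms(1) by simp
  have "sum d M = (\<Sum>X\<in>cls M R ` M. sum d X)"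
    by (rule sum_classes[OF assms(1) po order_refl clM])
  also have "\<dots> = sum d (A \<union> B) + (\<Sum>X\<in>cls M R ` M - {A \<union> B}. sum d X)"
    by (rule sum.remove[OF finC Cin])
  also have "(\<Sum>X\<in>cls M R ` M - {A \<union> B}. sum d X) = 0"
    by (rule sum.neutral) (use other in blast)
  finally have dC: "sum d (A \<union> B) = 0" using dM by simp
  have allcls: "sum d X = 0" if "j \<in> M" "X = cls M R j" for j X
  proof (cases "X = A \<union> B")
    case True then show ?thesis using dC by simp
  next
    case False then show ?thesis using other that by simp
  qed
  define U where "U a = {j\<in>M. (j,a) \<in> R}" for a
  have Uzero: "sum d (U a) = 0" for a
  proof -
    have UM: "U a \<subseteq> M" unfolding U_def by blast
    have cl: "\<And>j x. j \<in> U a \<Longrightarrow> x \<in> M \<Longrightarrow> (j,x) \<in> R \<Longrightarrow> (x,j) \<in> R \<Longrightarrow> x \<in> U a"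
      unfolding U_def using tr by (auto dest: transD)
    have "sum d (U a) = (\<Sum>X\<in>cls M R ` U a. sum d X)"
      by (rule sum_classes[OF assms(1) po UM cl])
    also have "\<dots> = 0" by (rule sum.neutral) (use allcls UM in blast)
    finally show ?thesis .
  qed
  have finU: "finite (U a)" for a unfolding U_def using assms(1) by simp
  have f1: "fosd M R (\<phi> R) (\<phi> R')"
    unfolding fosd_def
  proof
    fix a assume "a \<in> M"
    have "sum (\<phi> R') (U a) - sum (\<phi> R) (U a) = 0" using Uzero sumd by simp
    then show "sum (\<phi> R') {j\<in>M. (j,a) \<in> R} \<le> sum (\<phi> R) {j\<in>M. (j,a) \<in> R}"
      unfolding U_def by simp
  qed
  have respB: "prob_of \<phi> R' B \<le> prob_of \<phi> R B"
    using assms(3) sep unfolding sep_monotonic_def sep_responsive_def by blast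
  have f2: "fosd M R' (\<phi> R') (\<phi> R)"
    unfolding fosd_def
  proof
    fix a assume aM: "a \<in> M"
    show "sum (\<phi> R) {j\<in>M. (j,a) \<in> R'} \<le> sum (\<phi> R') {j\<in>M. (j,a) \<in> R'}"
    proof (cases "a \<in> A")
      case False
      then have "{j\<in>M. (j,a) \<in> R'} = U a" unfolding U_def R' by auto
      then show ?thesis using Uzero sumd by simp
    next
      case True
      have eq: "{j\<in>M. (j,a) \<in> R'} = U a - B" unfolding U_def R' using True by auto
      have BU: "B \<subseteq> U a"
      proof
        fix b assume "b \<in> B"
        then have "b \<in> cls M R c" "a \<in> cls M R c" using c True by auto
        then show "b \<in> U a" unfolding U_def cls_def using tr by (auto dest: transD)
      qed
      have "sum d (U a - B) = sum d (U a) - sum d B"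
        by (rule sum_diff[OF finU BU])
      then have "sum d (U a - B) = - sum d B" using Uzero by simp
      moreover have "sum d B \<le> 0" using respB sumd unfolding prob_of_def by simp
      ultimately have "sum d (U a - B) \<ge> 0" by simp
      then show ?thesis using eq sumd by simp
    qed
  qed
  show "fosd M R (\<phi> R) (\<phi> R') \<and> fosd M R' (\<phi> R') (\<phi> R)" using f1 f2 by blast
qed

end
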